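(* Let $A$ be a finite set and let $C, D \subseteq O_A$ be total clones with $D \subseteq C$ such that for some $a\in A$ the constant function $c_a$ (of some arity) belongs to $C$ but not to $D$. Then $|\mathcal{I}_{\mathrm{str}}(D)| \geq |\mathcal{I}_{\mathrm{str}}(C)|$.
   Context: A partial function of arity $n$ on $A$ is a map $f:\operatorname{dom} f\to A$ with $\operatorname{dom} f\subseteq A^n$; it is total if $\operatorname{dom} f=A^n$. $P_A$ is the set of all partial functions on $A$, $O_A$ the set of total ones. Composition $F=f(g_1,\dots,g_n)$ ($f$ $n$-ary, $g_i$ $m$-ary) is given by $F(\mathbf{x})=f(g_1(\mathbf{x}),\dots,g_n(\mathbf{x}))$ on $\operatorname{dom} F=\{\mathbf{x}\in\bigcap_i\operatorname{dom} g_i : (g_1(\mathbf{x}),\dots,g_n(\mathbf{x}))\in\operatorname{dom} f\}$. A partial clone is a composition-closed subset of $P_A$ containing all projections; a total clone is one contained in $O_A$. A partial clone $X$ is strong if whenever $g\in X$ and $f$ is a restriction of $g$ ($\operatorname{dom} f\subseteq\operatorname{dom} g$, $f=g$ on $\operatorname{dom} f$) then $f\in X$. For a total clone $C$, $\mathcal{I}_{\mathrm{str}}(C)$ is the set of all strong partial clones $X\subseteq P_A$ with $X\cap O_A=C$. $c_a$ denotes the constant total function with value $a$. *)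

theory Defs
  imports Main
begin

text \<open>A partial function of arity n on the carrier (the finite type 'a) is a pair
  (n, F) with F :: 'a list => 'a option; F xs = None means xs is not in the domain.\<close>

type_synonym 'a pfun = "nat \<times> ('a list \<Rightarrow> 'a option)"

definition arity :: "'a pfun \<Rightarrow> nat" where "arity f = fst f"
definition app :: "'a pfun \<Rightarrow> 'a list \<Rightarrow> 'a option" where "app f = snd f"

definition P_A :: "'a pfun set" where
  "P_A = {f. arity f \<ge> 1 \<and> (\<forall>xs. length xs \<noteq> arity f \<longrightarrow> app f xs = None)}"

definition O_A :: "'a pfun set" where
  "O_A = {f. f \<in> P_A \<and> (\<forall>xs. length xs = arity f \<longrightarrow> app f xs \<noteq> None)}"

definition proj :: "nat \<Rightarrow> nat \<Rightarrow> 'a pfun" where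
  "proj n i = (n, \<lambda>xs. if length xs = n then Some (xs ! i) else None)"

definition constf :: "nat \<Rightarrow> 'a \<Rightarrow> 'a pfun" where
  "constf n a = (n, \<lambda>xs. if length xs = n then Some a else None)"

definition comp_pf :: "'a pfun \<Rightarrow> 'a pfun list \<Rightarrow> nat \<Rightarrow> 'a pfun" where
  "comp_pf f gs m = (m, \<lambda>xs. if length xs = m \<and> (\<forall>g\<in>set gs. app g xs \<noteq> None)
      then app f (map (\<lambda>g. the (app g xs)) gs) else None)"

definition partial_clone :: "'a pfun set \<Rightarrow> bool" where
  "partial_clone X \<longleftrightarrow> X \<subseteq> P_A
    \<and> (\<forall>n i. 1 \<le> n \<and> i < n \<longrightarrow> proj n i \<in> X)
    \<and> (\<forall>f gs m. f \<in> X \<and> set gs \<subseteq> X \<and> length gs = arity f \<and> 1 \<le> m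
          \<and> (\<forall>g\<in>set gs. arity g = m) \<longrightarrow> comp_pf f gs m \<in> X)"

definition total_clone :: "'a pfun set \<Rightarrow> bool" where
  "total_clone C \<longleftrightarrow> partial_clone C \<and> C \<subseteq> O_A"

definition restriction_of :: "'a pfun \<Rightarrow> 'a pfun \<Rightarrow> bool" where
  "restriction_of f g \<longleftrightarrow> arity f = arity g \<and>
     (\<forall>xs. app f xs \<noteq> None \<longrightarrow> app f xs = app g xs)"

definition strong_partial_clone :: "'a pfun set \<Rightarrow> bool" where
  "strong_partial_clone X \<longleftrightarrow> partial_clone X \<and>
     (\<forall>f g. g \<in> X \<and> f \<in> P_A \<and> restriction_of f g \<longrightarrow> f \<in> X)"

definition I_str :: "'a pfun set \<Rightarrow> 'a pfun set set" where
  "I_str C = {X. strong_partial_clone X \<and> X \<inter> O_A = C}"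

end

theory Submission
  imports Defs
begin

lemma arity_comp[simp]: "arity (comp_pf f gs m) = m" by (simp add: arity_def comp_pf_def)
lemma app_comp: "app (comp_pf f gs m) xs = (if length xs = m \<and> (\<forall>g\<in>set gs. app g xs \<noteq> None)
      then app f (map (\<lambda>g. the (app g xs)) gs) else None)" by (simp add: app_def comp_pf_def)
lemma arity_proj[simp]: "arity (proj n i) = n" by (simp add: arity_def proj_def)
lemma app_proj: "app (proj n i) xs = (if length xs = n then Some (xs ! i) else None)" by (simp add: app_def proj_def)
lemma arity_constf[simp]: "arity (constf n a) = n" by (simp add: arity_def constf_def)
lemma app_constf: "app (constf n a) xs = (if length xs = n then Some a else None)" by (simp add: app_def constf_def)

lemma pfun_eqI: "arity f = arity g \<Longrightarrow> (\<And>xs. app f xs = app g xs) \<Longrightarrow> f = g"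
  by (cases f, cases g) (auto simp: arity_def app_def)

lemma app_comp_def: "app (comp_pf f gs m) xs \<noteq> None \<Longrightarrow> length xs = m \<and> (\<forall>g\<in>set gs. app g xs \<noteq> None)"
  by (auto simp: app_comp split: if_splits)

lemma app_comp_def2: "app (comp_pf f gs m) xs \<noteq> None \<Longrightarrow> \<forall>g\<in>set gs. app g xs \<noteq> None"
  by (simp add: app_comp split: if_splits)

lemma comp_OA: "comp_pf f gs m \<in> O_A \<longleftrightarrow> 1 \<le> m \<and> (\<forall>xs. length xs = m \<longrightarrow> app (comp_pf f gs m) xs \<noteq> None)"
  by (auto simp: O_A_def P_A_def app_comp)

lemma comp_assoc:
  assumes "hs \<noteq> []" "length gs = k"
  shows "comp_pf (comp_pf f hs k) gs m = comp_pf f (map (\<lambda>h. comp_pf h gs m) hs) m"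
proof (rule pfun_eqI)
  fix xs
  show "app (comp_pf (comp_pf f hs k) gs m) xs = app (comp_pf f (map (\<lambda>h. comp_pf h gs m) hs) m) xs"
  proof (cases "length xs = m \<and> (\<forall>g\<in>set gs. app g xs \<noteq> None)")
    case True
    let ?ys = "map (\<lambda>g. the (app g xs)) gs"
    have e: "\<And>h. app (comp_pf h gs m) xs = app h ?ys" using True by (simp add: app_comp)
    have l: "app (comp_pf (comp_pf f hs k) gs m) xs = app (comp_pf f hs k) ?ys"
      using True by (simp add: app_comp)
    have r: "app (comp_pf f (map (\<lambda>h. comp_pf h gs m) hs) m) xs
      = (if \<forall>h\<in>set hs. app h ?ys \<noteq> None then app f (map (\<lambda>h. the (app h ?ys)) hs) else None)"
      using True e by (simp add: app_comp[of f] o_def) (metis option.distinct(1))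
    show ?thesis using l r assms(2) by (simp add: app_comp[of f hs])
  next
    case False
    have e: "\<And>h. app (comp_pf h gs m) xs = None" using False unfolding app_comp by (metis (no_types, lifting) option.distinct(1))
    obtain h0 where "h0 \<in> set hs" using assms(1) by (cases hs) auto
    then have "\<not> (\<forall>h\<in>set (map (\<lambda>h. comp_pf h gs m) hs). app h xs \<noteq> None)" using e by (metis image_eqI list.set_map)
    then show ?thesis using False by (simp only: app_comp[of f "map (\<lambda>h. comp_pf h gs m) hs"] app_comp[of "comp_pf f hs k"] if_False simp_thms)
  qed
qed simp

definition YD :: "'a pfun set \<Rightarrow> 'a pfun set \<Rightarrow> 'a pfun set" where
  "YD D X = {f \<in> X. \<forall>gs m. set gs \<subseteq> D \<and> length gs = arity f \<and> 1 \<le> m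
     \<and> (\<forall>g\<in>set gs. arity g = m) \<and> comp_pf f gs m \<in> O_A \<longrightarrow> comp_pf f gs m \<in> D}"

lemma YD_D: "f \<in> YD D X \<Longrightarrow> set gs \<subseteq> D \<Longrightarrow> length gs = arity f \<Longrightarrow> 1 \<le> m
  \<Longrightarrow> \<forall>g\<in>set gs. arity g = m \<Longrightarrow> comp_pf f gs m \<in> O_A \<Longrightarrow> comp_pf f gs m \<in> D"
  unfolding YD_def by blast

lemma YD_I: "f \<in> X \<Longrightarrow> (\<And>gs m. set gs \<subseteq> D \<Longrightarrow> length gs = arity f \<Longrightarrow> 1 \<le> m
  \<Longrightarrow> \<forall>g\<in>set gs. arity g = m \<Longrightarrow> comp_pf f gs m \<in> O_A \<Longrightarrow> comp_pf f gs m \<in> D) \<Longrightarrow> f \<in> YD D X"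
  unfolding YD_def by blast

lemma proj_comp:
  assumes "set gs \<subseteq> O_A" "\<forall>g\<in>set gs. arity g = m" "i < length gs" "length gs = n"
  shows "comp_pf (proj n i) gs m = gs ! i"
proof (rule pfun_eqI)
  have gi: "gs ! i \<in> O_A" "arity (gs ! i) = m" using assms nth_mem by blast+
  then show "arity (comp_pf (proj n i) gs m) = arity (gs ! i)" by simp
  fix xs
  show "app (comp_pf (proj n i) gs m) xs = app (gs ! i) xs"
  proof (cases "length xs = m")
    case True
    then have "\<forall>g\<in>set gs. app g xs \<noteq> None" using assms by (auto simp: O_A_def)
    moreover have "app (gs!i) xs \<noteq> None" using gi True by (auto simp: O_A_def)
    ultimately show ?thesis using True assms by (auto simp: app_comp app_proj)
  next
    case False
    then show ?thesis using gi by (auto simp: app_comp O_A_def P_A_def)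
  qed
qed

lemma comp_projs:
  assumes "f \<in> P_A"
  shows "comp_pf f (map (proj (arity f)) [0..<arity f]) (arity f) = f"
proof (rule pfun_eqI)
  fix xs
  show "app (comp_pf f (map (proj (arity f)) [0..<arity f]) (arity f)) xs = app f xs"
  proof (cases "length xs = arity f")
    case True
    then have "map (\<lambda>i. xs ! i) [0..<arity f] = xs" using map_nth[of xs] by simp
    then show ?thesis using True by (auto simp: app_comp app_proj o_def)
  next
    case False then show ?thesis using assms by (auto simp: app_comp P_A_def)
  qed
qed simp

lemma restr_comp:
  assumes "restriction_of f g" "comp_pf f gs m \<in> O_A"
  shows "comp_pf f gs m = comp_pf g gs m"
proof (rule pfun_eqI)
  fix xs
  show "app (comp_pf f gs m) xs = app (comp_pf g gs m) xs"
  proof (cases "length xs = m")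
    case True
    then have "app (comp_pf f gs m) xs \<noteq> None" using assms(2)[unfolded comp_OA] by simp
    then have all: "\<forall>g\<in>set gs. app g xs \<noteq> None" by (rule app_comp_def2)
    have e1: "app (comp_pf f gs m) xs = app f (map (\<lambda>g. the (app g xs)) gs)"
      using True all by (simp add: app_comp)
    have e2: "app (comp_pf g gs m) xs = app g (map (\<lambda>g. the (app g xs)) gs)"
      using True all by (simp add: app_comp)
    have "app f (map (\<lambda>g. the (app g xs)) gs) \<noteq> None" using e1 \<open>app (comp_pf f gs m) xs \<noteq> None\<close> by simp
    then have "app f (map (\<lambda>g. the (app g xs)) gs) = app g (map (\<lambda>g. the (app g xs)) gs)"
      using assms(1) unfolding restriction_of_def by blast
    then show ?thesis using e1 e2 by simp
  next
    case False then show ?thesis by (simp add: app_comp)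
  qed
qed simp

lemma const_comp:
  assumes "1 \<le> n"
  shows "comp_pf (constf m a) (replicate m (proj n 0)) n = constf n a"
proof (rule pfun_eqI)
  fix xs :: "'a list"
  show "app (comp_pf (constf m a) (replicate m (proj n 0)) n) xs = app (constf n a) xs"
  proof (cases "length xs = n")
    case True
    have "\<forall>g\<in>set (replicate m (proj n 0)). app g xs \<noteq> None"
      using True by (simp add: app_proj)
    then show ?thesis using True by (simp add: app_comp app_constf)
  next
    case False then show ?thesis by (simp add: app_comp app_constf)
  qed
qed simp

definition ext_pf :: "'a \<Rightarrow> 'a pfun \<Rightarrow> 'a pfun" where
  "ext_pf a f = (arity f + 1, \<lambda>xs. if length xs = arity f + 1 \<and> last xs = a then app f (butlast xs) else None)"

lemma arity_ext[simp]: "arity (ext_pf a f) = arity f + 1" by (simp add: ext_pf_def arity_def)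
lemma app_ext: "app (ext_pf a f) xs = (if length xs = arity f + 1 \<and> last xs = a then app f (butlast xs) else None)"
  by (simp add: ext_pf_def app_def)

lemma consts_in:
  assumes "partial_clone C" "constf n0 a \<in> C" "1 \<le> n0" "1 \<le> n"
  shows "constf n a \<in> C"
proof -
  have "proj n 0 \<in> C" using assms unfolding partial_clone_def by simp
  then have "set (replicate n0 (proj n 0)) \<subseteq> C" by (metis in_set_replicate subsetI)
  moreover have "\<forall>g\<in>set (replicate n0 (proj n 0)). arity g = n" by simp
  ultimately have "comp_pf (constf n0 a) (replicate n0 (proj n 0)) n \<in> C"
    using assms unfolding partial_clone_def by (metis arity_constf length_replicate)
  then show ?thesis using const_comp assms(4) by metis
qed

lemma clone_comp: "partial_clone X \<Longrightarrow> f \<in> X \<Longrightarrow> set gs \<subseteq> X \<Longrightarrow> length gs = arity f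
  \<Longrightarrow> 1 \<le> m \<Longrightarrow> \<forall>g\<in>set gs. arity g = m \<Longrightarrow> comp_pf f gs m \<in> X"
  unfolding partial_clone_def by blast

lemma clone_P: "partial_clone X \<Longrightarrow> X \<subseteq> P_A" by (simp add: partial_clone_def)
lemma clone_proj: "partial_clone X \<Longrightarrow> 1 \<le> n \<Longrightarrow> i < n \<Longrightarrow> proj n i \<in> X"
  by (simp add: partial_clone_def)

lemma strong_restr: "strong_partial_clone X \<Longrightarrow> g \<in> X \<Longrightarrow> f \<in> P_A \<Longrightarrow> restriction_of f g \<Longrightarrow> f \<in> X"
  unfolding strong_partial_clone_def by blast

lemma partial_cloneI: "X \<subseteq> P_A \<Longrightarrow> (\<And>n i. 1 \<le> n \<Longrightarrow> i < n \<Longrightarrow> proj n i \<in> X)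
  \<Longrightarrow> (\<And>f gs m. f \<in> X \<Longrightarrow> set gs \<subseteq> X \<Longrightarrow> length gs = arity f \<Longrightarrow> 1 \<le> m
          \<Longrightarrow> \<forall>g\<in>set gs. arity g = m \<Longrightarrow> comp_pf f gs m \<in> X) \<Longrightarrow> partial_clone X"
  unfolding partial_clone_def by blast

lemma YD_in:
  assumes C: "total_clone C" and D: "total_clone D" and DC: "D \<subseteq> C" and X: "X \<in> I_str C"
  shows "YD D X \<in> I_str D"
proof -
  have Xs: "strong_partial_clone X" and XC: "X \<inter> O_A = C" using X by (auto simp: I_str_def)
  have Xp: "partial_clone X" using Xs by (simp add: strong_partial_clone_def)
  have Dp: "partial_clone D" "D \<subseteq> O_A" using D by (auto simp: total_clone_def)
  have DX: "D \<subseteq> X" using DC XC by blast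
  have XP: "X \<subseteq> P_A" using Xp by (simp add: partial_clone_def)
  have sub: "YD D X \<subseteq> X" unfolding YD_def by blast
  have projY: "proj n i \<in> YD D X" if "1 \<le> n" "i < n" for n i
  proof -
    have pX: "proj n i \<in> X" using Xp that by (simp add: partial_clone_def)
    have pD: "comp_pf (proj n i) gs m \<in> D" if "set gs \<subseteq> D" "length gs = n"
      "\<forall>g\<in>set gs. arity g = m" for gs m
    proof -
      have "comp_pf (proj n i) gs m = gs ! i"
        by (rule proj_comp) (use that Dp \<open>i < n\<close> in auto)
      then show ?thesis using that \<open>i < n\<close> nth_mem by fastforce
    qed
    show ?thesis by (rule YD_I[OF pX]) (rule pD, simp_all)
  qed
  have compY: "comp_pf f hs k \<in> YD D X" if f: "f \<in> YD D X" and hs: "set hs \<subseteq> YD D X"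
    and len: "length hs = arity f" and k: "1 \<le> k" and ar: "\<forall>h\<in>set hs. arity h = k" for f hs k
  proof -
    have fX: "f \<in> X" using f sub by blast
    have hsX: "set hs \<subseteq> X" using hs sub by blast
    have F: "comp_pf f hs k \<in> X" using clone_comp[OF Xp fX hsX len k ar] .
    have hne: "hs \<noteq> []" using len fX XP by (auto simp: P_A_def)
    have cD: "comp_pf (comp_pf f hs k) gs m \<in> D" if gs: "set gs \<subseteq> D" "length gs = k" "1 \<le> m"
      "\<forall>g\<in>set gs. arity g = m" "comp_pf (comp_pf f hs k) gs m \<in> O_A" for gs m
    proof -
      have eq: "comp_pf (comp_pf f hs k) gs m = comp_pf f (map (\<lambda>h. comp_pf h gs m) hs) m"
        by (rule comp_assoc[OF hne gs(2)])
      have tot: "\<forall>xs. length xs = m \<longrightarrow> app (comp_pf f (map (\<lambda>h. comp_pf h gs m) hs) m) xs \<noteq> None"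
        using gs(5)[unfolded eq comp_OA] by (rule conjunct2)
      have hD: "comp_pf h gs m \<in> D" if h: "h \<in> set hs" for h
      proof -
        have hO: "comp_pf h gs m \<in> O_A" unfolding comp_OA
        proof (intro conjI allI impI)
          fix xs :: "'a list" assume "length xs = m"
          then have "app (comp_pf f (map (\<lambda>h. comp_pf h gs m) hs) m) xs \<noteq> None" using tot by blast
          then have "\<forall>g\<in>set (map (\<lambda>h. comp_pf h gs m) hs). app g xs \<noteq> None"
            by (rule app_comp_def2)
          then show "app (comp_pf h gs m) xs \<noteq> None" using h by simp
        qed (rule gs(3))
        have hY: "h \<in> YD D X" using hs h by blast
        show ?thesis using YD_D[OF hY gs(1) _ gs(3) gs(4) hO] gs(2) ar h by simp
      qed
      have s1: "set (map (\<lambda>h. comp_pf h gs m) hs) \<subseteq> D" using hD by auto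
      have s2: "\<forall>g\<in>set (map (\<lambda>h. comp_pf h gs m) hs). arity g = m" by simp
      have "comp_pf f (map (\<lambda>h. comp_pf h gs m) hs) m \<in> D"
        using YD_D[OF f s1 _ gs(3) s2] len gs(5) eq by simp
      then show ?thesis using eq by simp
    qed
    show ?thesis by (rule YD_I[OF F]) (rule cD, simp_all)
  qed
  have strong: "f \<in> YD D X" if g: "g \<in> YD D X" and f: "f \<in> P_A" and r: "restriction_of f g" for f g
  proof -
    have fX: "f \<in> X" using strong_restr[OF Xs _ f r] g sub by blast
    have cD: "comp_pf f gs m \<in> D" if "set gs \<subseteq> D" "length gs = arity f" "1 \<le> m"
      "\<forall>g\<in>set gs. arity g = m" "comp_pf f gs m \<in> O_A" for gs m
    proof -
      have e: "comp_pf f gs m = comp_pf g gs m" using restr_comp[OF r that(5)] .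
      have "arity f = arity g" using r by (simp add: restriction_of_def)
      then have "comp_pf g gs m \<in> D" using YD_D[OF g that(1) _ that(3,4)] that(2,5) e by simp
      then show ?thesis using e by simp
    qed
    show ?thesis by (rule YD_I[OF fX]) (rule cD, simp_all)
  qed
  have tot: "YD D X \<inter> O_A = D"
  proof
    show "YD D X \<inter> O_A \<subseteq> D"
    proof
      fix f assume f: "f \<in> YD D X \<inter> O_A"
      let ?n = "arity f"
      have fP: "f \<in> P_A" using f by (auto simp: O_A_def)
      have n1: "1 \<le> ?n" using fP by (simp add: P_A_def)
      have pD: "set (map (proj ?n) [0..<?n]) \<subseteq> D" using Dp(1) n1 by (auto simp: partial_clone_def)
      have e: "comp_pf f (map (proj ?n) [0..<?n]) ?n = f" using comp_projs[OF fP] .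
      have fY: "f \<in> YD D X" and fO: "f \<in> O_A" using f by auto
      have s2: "\<forall>g\<in>set (map (proj ?n) [0..<?n]). arity g = ?n" by simp
      have "comp_pf f (map (proj ?n) [0..<?n]) ?n \<in> D"
        using YD_D[OF fY pD _ n1 s2] e fO by simp
      then show "f \<in> D" using e by simp
    qed
    show "D \<subseteq> YD D X \<inter> O_A"
    proof
      fix f assume f: "f \<in> D"
      have cD: "comp_pf f gs m \<in> D" if "set gs \<subseteq> D" "length gs = arity f" "1 \<le> m"
        "\<forall>g\<in>set gs. arity g = m" for gs m
        using clone_comp[OF Dp(1) f that] .
      have "f \<in> YD D X" by (rule YD_I) (use f DX in blast, rule cD)
      then show "f \<in> YD D X \<inter> O_A" using f Dp(2) by blast
    qed
  qed
  have "partial_clone (YD D X)"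
    using sub XP projY compY by (intro partial_cloneI) blast+
  then have "strong_partial_clone (YD D X)"
    unfolding strong_partial_clone_def using strong by blast
  then show ?thesis using tot by (simp add: I_str_def)
qed


lemma butlast_map: "length xs = n + 1 \<Longrightarrow> map (\<lambda>i. xs ! i) [0..<n] = butlast xs"
  by (rule nth_equalityI) (auto simp: nth_butlast)

lemma ext_in:
  assumes Xs: "strong_partial_clone X" and f: "f \<in> X"
  shows "ext_pf a f \<in> X"
proof -
  let ?n = "arity f"
  have Xp: "partial_clone X" using Xs by (simp add: strong_partial_clone_def)
  have fP: "f \<in> P_A" using clone_P[OF Xp] f by blast
  have n1: "1 \<le> ?n" using fP by (simp add: P_A_def)
  have pX: "set (map (proj (?n+1)) [0..<?n]) \<subseteq> X" using clone_proj[OF Xp] by auto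
  have f2: "comp_pf f (map (proj (?n+1)) [0..<?n]) (?n+1) \<in> X"
    by (rule clone_comp[OF Xp f pX]) auto
  have eP: "ext_pf a f \<in> P_A" by (auto simp: P_A_def app_ext)
  have r: "restriction_of (ext_pf a f) (comp_pf f (map (proj (?n+1)) [0..<?n]) (?n+1))"
    unfolding restriction_of_def
  proof (intro conjI allI impI)
    fix xs :: "'a list" assume h: "app (ext_pf a f) xs \<noteq> None"
    then have l: "length xs = ?n + 1" by (simp add: app_ext split: if_splits)
    have la: "last xs = a" using h by (simp add: app_ext split: if_splits)
    have m: "map (\<lambda>g. the (app g xs)) (map (proj (?n+1)) [0..<?n]) = butlast xs"
      using butlast_map[OF l] l by (simp add: app_proj o_def)
    have d: "\<forall>g\<in>set (map (proj (?n+1)) [0..<?n]). app g xs \<noteq> None"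
      using l by (simp add: app_proj)
    have "app (comp_pf f (map (proj (?n+1)) [0..<?n]) (?n+1)) xs = app f (butlast xs)"
      using l d m by (simp only: app_comp) simp
    moreover have "app (ext_pf a f) xs = app f (butlast xs)" using l la by (simp add: app_ext)
    ultimately show "app (ext_pf a f) xs = app (comp_pf f (map (proj (?n+1)) [0..<?n]) (?n+1)) xs"
      by simp
  qed simp
  show ?thesis by (rule strong_restr[OF Xs f2 eP r])
qed

lemma ext_back:
  assumes Xp: "partial_clone X" and c: "constf (arity f) a \<in> X" and fP: "f \<in> P_A"
    and e: "ext_pf a f \<in> X"
  shows "f \<in> X"
proof -
  let ?n = "arity f"
  let ?gs = "map (proj ?n) [0..<?n] @ [constf ?n a]"
  have n1: "1 \<le> ?n" using fP by (simp add: P_A_def)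
  have "set (map (proj ?n) [0..<?n]) \<subseteq> X" using clone_proj[OF Xp n1] by auto
  then have gX: "set ?gs \<subseteq> X" using c by simp
  have "comp_pf (ext_pf a f) ?gs ?n \<in> X"
    by (rule clone_comp[OF Xp e gX]) (use n1 in auto)
  moreover have "comp_pf (ext_pf a f) ?gs ?n = f"
  proof (rule pfun_eqI)
    fix xs
    show "app (comp_pf (ext_pf a f) ?gs ?n) xs = app f xs"
    proof (cases "length xs = ?n")
      case True
      have "map (\<lambda>g. the (app g xs)) ?gs = xs @ [a]"
        using True map_nth[of xs] by (simp add: app_proj app_constf o_def)
      moreover have d: "\<forall>g\<in>set ?gs. app g xs \<noteq> None" using True by (simp add: app_proj app_constf)
      ultimately have "app (comp_pf (ext_pf a f) ?gs ?n) xs = app (ext_pf a f) (xs @ [a])"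
        using True by (simp only: app_comp) simp
      also have "\<dots> = app f xs" using True by (simp add: app_ext)
      finally show ?thesis .
    next
      case False then show ?thesis using fP by (auto simp: app_comp P_A_def)
    qed
  qed simp
  ultimately show ?thesis by simp
qed

lemma ext_YD:
  assumes e: "ext_pf a f \<in> X" and D: "D \<subseteq> O_A" and nc: "\<forall>m\<ge>1. constf m a \<notin> D"
  shows "ext_pf a f \<in> YD D X"
proof -
  have F: False if gs: "set gs \<subseteq> D" "length gs = arity f + 1" "1 \<le> m"
      "\<forall>g\<in>set gs. arity g = m" "comp_pf (ext_pf a f) gs m \<in> O_A" for gs m
  proof -
    have ne: "gs \<noteq> []" using gs(2) by auto
    let ?g = "last gs"
    have gD: "?g \<in> D" using ne gs(1) last_in_set by blast
    have ga: "arity ?g = m" using ne gs(4) last_in_set by blast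
    have "?g = constf m a"
    proof (rule pfun_eqI)
      fix xs
      show "app ?g xs = app (constf m a) xs"
      proof (cases "length xs = m")
        case True
        then have h: "app (comp_pf (ext_pf a f) gs m) xs \<noteq> None" using gs(5)[unfolded comp_OA] by simp
        then have all: "\<forall>g\<in>set gs. app g xs \<noteq> None" by (rule app_comp_def2)
        have "app (ext_pf a f) (map (\<lambda>g. the (app g xs)) gs) \<noteq> None"
          using h all True by (simp add: app_comp)
        then have "last (map (\<lambda>g. the (app g xs)) gs) = a" by (simp add: app_ext split: if_splits)
        then have "the (app ?g xs) = a" using ne by (simp add: last_map)
        moreover have "app ?g xs \<noteq> None" using all ne by simp
        ultimately have "app ?g xs = Some a" by (cases "app ?g xs") auto
        then show ?thesis using True by (simp add: app_constf)
      next
        case False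
        have "?g \<in> P_A" using gD D unfolding O_A_def by blast
        then have "app ?g xs = None" using False ga unfolding P_A_def by blast
        then show ?thesis using False by (simp add: app_constf)
      qed
    qed (simp add: ga)
    moreover have "constf m a \<notin> D" using nc gs(3) by blast
    ultimately show False using gD by simp
  qed
  show ?thesis
  proof (rule YD_I[OF e])
    fix gs m assume h: "set gs \<subseteq> D" "length gs = arity (ext_pf a f)" "1 \<le> m"
      "\<forall>g\<in>set gs. arity g = m" "comp_pf (ext_pf a f) gs m \<in> O_A"
    have False by (rule F[OF h(1) _ h(3) h(4) h(5)]) (use h(2) in simp)
    then show "comp_pf (ext_pf a f) gs m \<in> D" ..
  qed
qed

lemma YD_inj_sub:
  assumes X1: "X1 \<in> I_str C" and X2: "X2 \<in> I_str C" and eq: "YD D X1 = YD D X2"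
    and D: "D \<subseteq> O_A" and nc: "\<forall>m\<ge>1. constf m a \<notin> D" and cC: "\<forall>m\<ge>1. constf m a \<in> C"
  shows "X1 \<subseteq> X2"
proof
  fix f assume f: "f \<in> X1"
  have s1: "strong_partial_clone X1" using X1 by (simp add: I_str_def)
  have s2: "strong_partial_clone X2" "X2 \<inter> O_A = C" using X2 by (auto simp: I_str_def)
  have p2: "partial_clone X2" using s2 by (simp add: strong_partial_clone_def)
  have fP: "f \<in> P_A" using s1 f by (auto simp: strong_partial_clone_def partial_clone_def)
  have "ext_pf a f \<in> YD D X1" by (rule ext_YD[OF ext_in[OF s1 f] D nc])
  then have "ext_pf a f \<in> X2" using eq unfolding YD_def by blast
  moreover have "constf (arity f) a \<in> X2" using cC fP s2(2) by (auto simp: P_A_def)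
  ultimately show "f \<in> X2" using ext_back[OF p2 _ fP] by blast
qed

theorem mainTheorem10:
  fixes C D :: "('a::finite) pfun set"
  assumes "total_clone C" and "total_clone D" and "D \<subseteq> C"
    and "\<exists>a n. 1 \<le> n \<and> constf n a \<in> C \<and> constf n a \<notin> D"
  shows "\<exists>h. inj_on h (I_str C) \<and> h ` I_str C \<subseteq> I_str D"
proof -
  obtain a n0 where a: "1 \<le> n0" "constf n0 a \<in> C" "constf n0 a \<notin> D" using assms(4) by blast
  have Cp: "partial_clone C" and Dp: "partial_clone D" "D \<subseteq> O_A"
    using assms(1,2) by (auto simp: total_clone_def)
  have cC: "\<forall>m\<ge>1. constf m a \<in> C" using consts_in[OF Cp a(2) a(1)] by blast
  have nc: "\<forall>m\<ge>1. constf m a \<notin> D" using consts_in[OF Dp(1) _ _ a(1)] a(3) by blast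
  have "inj_on (YD D) (I_str C)"
  proof (rule inj_onI)
    fix X1 X2 assume h: "X1 \<in> I_str C" "X2 \<in> I_str C" "YD D X1 = YD D X2"
    have "X1 \<subseteq> X2" by (rule YD_inj_sub[OF h(1) h(2) h(3) Dp(2) nc cC])
    moreover have "X2 \<subseteq> X1" by (rule YD_inj_sub[OF h(2) h(1) h(3)[symmetric] Dp(2) nc cC])
    ultimately show "X1 = X2" by blast
  qed
  moreover have "YD D ` I_str C \<subseteq> I_str D" using YD_in[OF assms(1-3)] by blast
  ultimately show ?thesis by blast
qed

end
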